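(* Let $G$ be a countable infinite discrete group, $X$ an infinite compact Hausdorff space and $\alpha: G\curvearrowright X$ a continuous action with dynamical comparison such that there is no $G$-invariant regular Borel probability measure on $X$. Let $\phi\in C(X)$ be a non-zero positive function. Then there is an isometry $v\in C(X)\rtimes_r G$ such that $vv^\ast$ lies in the hereditary $C^\ast$-subalgebra of $C(X)\rtimes_r G$ generated by $\phi$.
   Context: Subequivalence: for closed $F$ and open $O$ in $X$, $F\prec O$ if there exist a finite open cover $\mathcal{U}$ of $F$ and $s_U\in G$ with the sets $s_UU$ pairwise disjoint subsets of $O$; for open $V$, $V\prec O$ means $F\prec O$ for all closed $F\subset V$. Dynamical comparison: $V\prec O$ for every open $V$ and nonempty open $O$ with $\mu(V)<\mu(O)$ for all $G$-invariant regular Borel probability measures $\mu$ (so here: $V\prec O$ for all open $V$ and nonempty open $O$). *)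

theory Defs
  imports "HOL-Analysis.Analysis" "HOL-Probability.Probability"
begin

text \<open>A continuous action of a (discrete) group, written additively (group_add is not
  assumed commutative) on a topological space.\<close>
definition cont_action :: "('g::group_add \<Rightarrow> 'x::topological_space \<Rightarrow> 'x) \<Rightarrow> bool" where
  "cont_action \<alpha> \<longleftrightarrow> \<alpha> 0 = id \<and> (\<forall>g h. \<alpha> (g + h) = \<alpha> g \<circ> \<alpha> h)
     \<and> (\<forall>g. continuous_on UNIV (\<alpha> g))"

definition subeq_closed :: "('g::group_add \<Rightarrow> 'x::topological_space \<Rightarrow> 'x) \<Rightarrow> 'x set \<Rightarrow> 'x set \<Rightarrow> bool" where
  "subeq_closed \<alpha> F W \<longleftrightarrow> (\<exists>UU s. finite UU \<and> (\<forall>U\<in>UU. open U) \<and> F \<subseteq> \<Union>UU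
      \<and> (\<forall>U\<in>UU. \<alpha> (s U) ` U \<subseteq> W)
      \<and> (\<forall>U\<in>UU. \<forall>U'\<in>UU. U \<noteq> U' \<longrightarrow> \<alpha> (s U) ` U \<inter> \<alpha> (s U') ` U' = {}))"

definition subeq_open :: "('g::group_add \<Rightarrow> 'x::topological_space \<Rightarrow> 'x) \<Rightarrow> 'x set \<Rightarrow> 'x set \<Rightarrow> bool" where
  "subeq_open \<alpha> V W \<longleftrightarrow> (\<forall>F. closed F \<and> F \<subseteq> V \<longrightarrow> subeq_closed \<alpha> F W)"

definition regular_borel_prob :: "'x::topological_space measure \<Rightarrow> bool" where
  "regular_borel_prob M \<longleftrightarrow> sets M = sets borel \<and> prob_space M
     \<and> (\<forall>A\<in>sets borel.
          measure M A = Inf {measure M U | U. open U \<and> A \<subseteq> U}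
        \<and> measure M A = Sup {measure M K | K. compact K \<and> K \<subseteq> A})"

definition invariant_measure :: "('g \<Rightarrow> 'x \<Rightarrow> 'x) \<Rightarrow> 'x::topological_space measure \<Rightarrow> bool" where
  "invariant_measure \<alpha> M \<longleftrightarrow> (\<forall>g. \<forall>A\<in>sets borel. measure M (\<alpha> g -` A) = measure M A)"

definition dyn_comparison :: "('g::group_add \<Rightarrow> 'x::topological_space \<Rightarrow> 'x) \<Rightarrow> bool" where
  "dyn_comparison \<alpha> \<longleftrightarrow> (\<forall>V W. open V \<and> open W \<and> W \<noteq> {}
      \<and> (\<forall>M. regular_borel_prob M \<and> invariant_measure \<alpha> M \<longrightarrow> measure M V < measure M W)
      \<longrightarrow> subeq_open \<alpha> V W)"

text \<open>We realise C(X) \<rtimes>_r G faithfully as operators on the direct sum over x \<in> X of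
  copies of \<ell>^2(G), namely the direct sum of the regular representations induced from the
  point evaluations ev_x (a faithful representation of C(X)).  An operator is given by
  its matrix kernel K x g h (the (g,h)-entry of the operator acting on the x-th copy).
  In fibre x, \<pi>(f) acts by (\<pi>(f)\<xi>)(g) = f(\<alpha> g x) \<xi>(g) and \<lambda>_s by (\<lambda>_s \<xi>)(g) = \<xi>(-s+g).\<close>

type_synonym ('g, 'x) kernel = "'x \<Rightarrow> 'g \<Rightarrow> 'g \<Rightarrow> complex"

definition fin_unit :: "('g \<Rightarrow> complex) \<Rightarrow> bool" where
  "fin_unit \<xi> \<longleftrightarrow> finite {g. \<xi> g \<noteq> 0} \<and> (\<Sum>g\<in>{g. \<xi> g \<noteq> 0}. (cmod (\<xi> g))\<^sup>2) \<le> 1"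

definition kform :: "('g, 'x) kernel \<Rightarrow> 'x \<Rightarrow> ('g \<Rightarrow> complex) \<Rightarrow> ('g \<Rightarrow> complex) \<Rightarrow> complex" where
  "kform K x \<eta> \<xi> = (\<Sum>g\<in>{g. \<eta> g \<noteq> 0}. \<Sum>h\<in>{h. \<xi> h \<noteq> 0}. cnj (\<eta> g) * K x g h * \<xi> h)"

definition kvals :: "('g, 'x) kernel \<Rightarrow> real set" where
  "kvals K = {cmod (kform K x \<eta> \<xi>) | x \<eta> \<xi>. fin_unit \<eta> \<and> fin_unit \<xi>}"

definition kbounded :: "('g, 'x) kernel \<Rightarrow> bool" where
  "kbounded K \<longleftrightarrow> bdd_above (kvals K)"

definition knorm :: "('g, 'x) kernel \<Rightarrow> real" where
  "knorm K = Sup (kvals K)"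

definition kadd :: "('g, 'x) kernel \<Rightarrow> ('g, 'x) kernel \<Rightarrow> ('g, 'x) kernel" where
  "kadd K L = (\<lambda>x g h. K x g h + L x g h)"

definition ksub :: "('g, 'x) kernel \<Rightarrow> ('g, 'x) kernel \<Rightarrow> ('g, 'x) kernel" where
  "ksub K L = (\<lambda>x g h. K x g h - L x g h)"

definition kmult :: "('g, 'x) kernel \<Rightarrow> ('g, 'x) kernel \<Rightarrow> ('g, 'x) kernel" where
  "kmult K L = (\<lambda>x g h. \<Sum>\<^sub>\<infinity>k. K x g k * L x k h)"

definition kadj :: "('g, 'x) kernel \<Rightarrow> ('g, 'x) kernel" where
  "kadj K = (\<lambda>x g h. cnj (K x h g))"

definition kid :: "('g, 'x) kernel" where
  "kid = (\<lambda>x g h. if g = h then 1 else 0)"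

definition kfun :: "('g \<Rightarrow> 'x \<Rightarrow> 'x) \<Rightarrow> ('x \<Rightarrow> complex) \<Rightarrow> ('g, 'x) kernel" where
  "kfun \<alpha> f = (\<lambda>x g h. if g = h then f (\<alpha> g x) else 0)"

text \<open>The algebraic crossed product: finite sums \<Sum>_s \<pi>(F s) \<lambda>_s with F s \<in> C(X).\<close>
definition cp_alg :: "('g::group_add \<Rightarrow> 'x::topological_space \<Rightarrow> 'x) \<Rightarrow> ('g, 'x) kernel set" where
  "cp_alg \<alpha> = {(\<lambda>x g h. F (g - h) (\<alpha> g x)) | F.
      finite {s. F s \<noteq> (\<lambda>_. 0)} \<and> (\<forall>s. continuous_on UNIV (F s))}"

definition crossed_prod :: "('g::group_add \<Rightarrow> 'x::topological_space \<Rightarrow> 'x) \<Rightarrow> ('g, 'x) kernel set" where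
  "crossed_prod \<alpha> = {K. kbounded K \<and> (\<forall>\<epsilon>>0. \<exists>L\<in>cp_alg \<alpha>. knorm (ksub K L) < \<epsilon>)}"

definition cstar_subalg :: "('g, 'x) kernel set \<Rightarrow> ('g, 'x) kernel set \<Rightarrow> bool" where
  "cstar_subalg A B \<longleftrightarrow> B \<subseteq> A
     \<and> (\<forall>a\<in>B. \<forall>b\<in>B. kadd a b \<in> B \<and> kmult a b \<in> B)
     \<and> (\<forall>c::complex. \<forall>a\<in>B. (\<lambda>x g h. c * a x g h) \<in> B)
     \<and> (\<forall>a\<in>B. kadj a \<in> B)
     \<and> (\<forall>a\<in>A. (\<forall>\<epsilon>>0. \<exists>b\<in>B. knorm (ksub a b) < \<epsilon>) \<longrightarrow> a \<in> B)"

definition kpos :: "('g, 'x) kernel set \<Rightarrow> ('g, 'x) kernel \<Rightarrow> bool" where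
  "kpos A a \<longleftrightarrow> (\<exists>c\<in>A. a = kmult (kadj c) c)"

definition hereditary_subalg :: "('g, 'x) kernel set \<Rightarrow> ('g, 'x) kernel set \<Rightarrow> bool" where
  "hereditary_subalg A B \<longleftrightarrow> cstar_subalg A B
     \<and> (\<forall>a\<in>A. \<forall>b\<in>B. kpos A a \<and> kpos A (ksub b a) \<longrightarrow> a \<in> B)"

definition hereditary_gen :: "('g, 'x) kernel set \<Rightarrow> ('g, 'x) kernel \<Rightarrow> ('g, 'x) kernel set" where
  "hereditary_gen A p = \<Inter>{B. hereditary_subalg A B \<and> p \<in> B}"

end

theory Submission
  imports Defs
begin


definition band :: "('g::group_add, 'x) kernel \<Rightarrow> 'g set \<Rightarrow> bool" where
  "band K S \<longleftrightarrow> finite S \<and> (\<forall>x g h. K x g h \<noteq> 0 \<longrightarrow> g - h \<in> S)"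

lemma diff_left_cancel': "(g::'g::group_add) - (- s + g) = s"
  by (simp add: diff_conv_add_uminus minus_add add.assoc[symmetric])

lemma finite_left: "finite S \<Longrightarrow> finite {k. (g::'g::group_add) - k \<in> S}"
proof -
  assume "finite S"
  have "{k. g - k \<in> S} = (\<lambda>s. - s + g) ` S"
  proof (intro set_eqI iffI)
    fix k assume "k \<in> {k. g - k \<in> S}"
    then show "k \<in> (\<lambda>s. - s + g) ` S"
      by (intro image_eqI[of _ _ "g - k"]) (auto simp: algebra_simps)
  qed (auto simp: diff_left_cancel')
  then show ?thesis using \<open>finite S\<close> by simp
qed

lemma finite_right: "finite S \<Longrightarrow> finite {k. k - (h::'g::group_add) \<in> S}"
proof -
  assume "finite S"
  have "{k. k - h \<in> S} = (\<lambda>s. s + h) ` S"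
  proof (intro set_eqI iffI)
    fix k assume "k \<in> {k. k - h \<in> S}"
    then show "k \<in> (\<lambda>s. s + h) ` S"
      by (intro image_eqI[of _ _ "k - h"]) (auto simp: algebra_simps)
  qed (auto simp: algebra_simps)
  then show ?thesis using \<open>finite S\<close> by simp
qed

lemma kmult_eq_sum:
  assumes "finite A" "\<And>k. k \<notin> A \<Longrightarrow> K x g k * L x k h = 0"
  shows "kmult K L x g h = (\<Sum>k\<in>A. K x g k * L x k h)"
proof -
  have "(\<Sum>\<^sub>\<infinity>k. K x g k * L x k h) = (\<Sum>\<^sub>\<infinity>k\<in>A. K x g k * L x k h)"
    by (rule infsum_cong_neutral) (use assms in auto)
  then show ?thesis using assms(1) by (simp add: kmult_def)
qed

lemma kmult_band_left:
  assumes "band K S" "A \<supseteq> {k. g - k \<in> S}" "finite A"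
  shows "kmult K L x g h = (\<Sum>k\<in>A. K x g k * L x k h)"
  using assms by (intro kmult_eq_sum) (auto simp: band_def)

lemma kmult_band_right:
  assumes "band L S" "A \<supseteq> {k. k - h \<in> S}" "finite A"
  shows "kmult K L x g h = (\<Sum>k\<in>A. K x g k * L x k h)"
  using assms by (intro kmult_eq_sum) (auto simp: band_def)

lemma band_mono: "band K S \<Longrightarrow> S \<subseteq> T \<Longrightarrow> finite T \<Longrightarrow> band K T"
  by (auto simp: band_def)

lemma band_kmult:
  assumes "band K S" "band L T"
  shows "band (kmult K L) {s + t | s t. s \<in> S \<and> t \<in> T}"
proof -
  have fin: "finite {s + t | s t. s \<in> S \<and> t \<in> T}"
  proof -
    have "{s + t | s t. s \<in> S \<and> t \<in> T} = (\<lambda>(s,t). s + t) ` (S \<times> T)" by auto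
    then show ?thesis using assms by (simp add: band_def)
  qed
  show ?thesis unfolding band_def
  proof (intro conjI fin allI impI)
    fix x g h assume ne: "kmult K L x g h \<noteq> 0"
    have "kmult K L x g h = (\<Sum>k\<in>{k. g - k \<in> S}. K x g k * L x k h)"
      using assms by (intro kmult_band_left[of K S]) (auto simp: band_def finite_left)
    with ne obtain k where "K x g k * L x k h \<noteq> 0" by (metis (no_types, lifting) sum.neutral)
    then have "g - k \<in> S" "k - h \<in> T" using assms by (auto simp: band_def)
    moreover have "g - h = (g - k) + (k - h)" by (simp add: algebra_simps)
    ultimately show "g - h \<in> {s + t | s t. s \<in> S \<and> t \<in> T}" by blast
  qed
qed

lemma band_kadj: "band K S \<Longrightarrow> band (kadj K) (uminus ` S)"
  unfolding band_def kadj_def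
  by (auto simp: image_iff) (metis minus_diff_eq)

lemma band_ksub: "band K S \<Longrightarrow> band L T \<Longrightarrow> band (ksub K L) (S \<union> T)"
  unfolding band_def ksub_def by (metis UnCI diff_0_right diff_self finite_UnI)

lemma band_kfun: "band (kfun \<alpha> f) {0}"
  unfolding band_def kfun_def by auto

lemma kmult_assoc:
  assumes "band K S" "band L T" "band N U"
  shows "kmult (kmult K L) N = kmult K (kmult L N)"
proof (intro ext)
  fix x g h
  define A where "A = {k. g - k \<in> S}"
  define B where "B = {k. k - h \<in> U}"
  have fA: "finite A" and fB: "finite B" using assms by (auto simp: A_def B_def band_def finite_left finite_right)
  have "kmult (kmult K L) N x g h = (\<Sum>k\<in>B. kmult K L x g k * N x k h)"
    using assms fB by (intro kmult_band_right[of N U]) (auto simp: B_def)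
  also have "\<dots> = (\<Sum>k\<in>B. (\<Sum>l\<in>A. K x g l * L x l k) * N x k h)"
    using assms fA by (intro sum.cong refl arg_cong2[where f="(*)"] kmult_band_left[of K S]) (auto simp: A_def)
  also have "\<dots> = (\<Sum>l\<in>A. K x g l * (\<Sum>k\<in>B. L x l k * N x k h))"
    by (simp add: sum_distrib_left sum_distrib_right mult.assoc sum.swap[of _ B A])
  also have "\<dots> = (\<Sum>l\<in>A. K x g l * kmult L N x l h)"
    using assms fB by (intro sum.cong refl arg_cong2[where f="(*)"] kmult_band_right[of N U, symmetric]) (auto simp: B_def)
  also have "\<dots> = kmult K (kmult L N) x g h"
    using assms fA by (intro kmult_band_left[of K S, symmetric]) (auto simp: A_def)
  finally show "kmult (kmult K L) N x g h = kmult K (kmult L N) x g h" .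
qed

lemma kmult_kfun_left: "kmult (kfun \<alpha> w) K = (\<lambda>x g h. w (\<alpha> g x) * K x g h)"
proof (intro ext)
  fix x g h
  have "kmult (kfun \<alpha> w) K x g h = (\<Sum>k\<in>{g}. kfun \<alpha> w x g k * K x k h)"
    by (rule kmult_eq_sum) (auto simp: kfun_def)
  then show "kmult (kfun \<alpha> w) K x g h = w (\<alpha> g x) * K x g h" by (simp add: kfun_def)
qed

lemma kmult_kfun_right: "kmult K (kfun \<alpha> w) = (\<lambda>x g h. K x g h * w (\<alpha> h x))"
proof (intro ext)
  fix x g h
  have "kmult K (kfun \<alpha> w) x g h = (\<Sum>k\<in>{h}. K x g k * kfun \<alpha> w x k h)"
    by (rule kmult_eq_sum) (auto simp: kfun_def)
  then show "kmult K (kfun \<alpha> w) x g h = K x g h * w (\<alpha> h x)" by (simp add: kfun_def)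
qed

lemma kmult_kid_left: "kmult kid K = K"
proof (intro ext)
  fix x g h
  have "kmult kid K x g h = (\<Sum>k\<in>{g}. kid x g k * K x k h)"
    by (rule kmult_eq_sum) (auto simp: kid_def)
  then show "kmult kid K x g h = K x g h" by (simp add: kid_def)
qed

lemma kadj_kadj[simp]: "kadj (kadj K) = K"
  by (simp add: kadj_def)

lemma kadj_kmult:
  assumes "band K S" "band L T"
  shows "kadj (kmult K L) = kmult (kadj L) (kadj K)"
proof (intro ext)
  fix x g h
  define A where "A = {k. h - k \<in> S}"
  have fA: "finite A" using assms by (auto simp: A_def band_def finite_left)
  have "kadj (kmult K L) x g h = cnj (\<Sum>k\<in>A. K x h k * L x k g)"
    unfolding kadj_def using assms fA by (subst kmult_band_left[of K S]) (auto simp: A_def)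
  also have "\<dots> = (\<Sum>k\<in>A. kadj L x g k * kadj K x k h)"
    by (simp add: kadj_def mult.commute)
  also have "\<dots> = kmult (kadj L) (kadj K) x g h"
    using assms fA by (intro kmult_band_right[of _ "uminus ` S", symmetric] band_kadj)
      (auto simp: A_def image_iff, metis minus_diff_eq minus_minus)
  finally show "kadj (kmult K L) x g h = kmult (kadj L) (kadj K) x g h" .
qed

lemma kmult_ksub_left:
  assumes "band K S" "band L T"
  shows "kmult (ksub K L) N = ksub (kmult K N) (kmult L N)"
proof (intro ext)
  fix x g h
  define A where "A = {k. g - k \<in> S \<union> T}"
  have fA: "finite A" using assms by (auto simp: A_def band_def finite_left)
  have b: "band (ksub K L) (S \<union> T)" "band K (S \<union> T)" "band L (S \<union> T)"
    using band_ksub[OF assms] band_mono[OF assms(1), of "S \<union> T"] band_mono[OF assms(2), of "S \<union> T"] assms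
    by (auto simp: band_def)
  show "kmult (ksub K L) N x g h = ksub (kmult K N) (kmult L N) x g h"
    unfolding ksub_def
    using kmult_band_left[OF b(1) _ fA] kmult_band_left[OF b(2) _ fA] kmult_band_left[OF b(3) _ fA]
    by (simp add: A_def ksub_def left_diff_distrib sum_subtractf)
qed

lemma kmult_ksub_right:
  assumes "band L T" "band N U"
  shows "kmult K (ksub L N) = ksub (kmult K L) (kmult K N)"
proof (intro ext)
  fix x g h
  define A where "A = {k. k - h \<in> T \<union> U}"
  have fA: "finite A" using assms by (auto simp: A_def band_def finite_right)
  have b: "band (ksub L N) (T \<union> U)" "band L (T \<union> U)" "band N (T \<union> U)"
    using band_ksub[OF assms] band_mono[OF assms(1), of "T \<union> U"] band_mono[OF assms(2), of "T \<union> U"] assms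
    by (auto simp: band_def)
  show "kmult K (ksub L N) x g h = ksub (kmult K L) (kmult K N) x g h"
    unfolding ksub_def
    using kmult_band_right[OF b(1) _ fA] kmult_band_right[OF b(2) _ fA] kmult_band_right[OF b(3) _ fA]
    by (simp add: A_def ksub_def right_diff_distrib sum_subtractf)
qed

lemma left_set: "{k. g - k \<in> S} = (\<lambda>s. - s + (g::'g::group_add)) ` S"
  proof (intro set_eqI iffI)
    fix k assume "k \<in> {k. g - k \<in> S}"
    then show "k \<in> (\<lambda>s. - s + g) ` S"
      by (intro image_eqI[of _ _ "g - k"]) (auto simp: algebra_simps)
  qed (auto simp: diff_left_cancel')

lemma right_set: "{k. k - h \<in> S} = (\<lambda>s. s + (h::'g::group_add)) ` S"
  proof (intro set_eqI iffI)
    fix k assume "k \<in> {k. k - h \<in> S}"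
    then show "k \<in> (\<lambda>s. s + h) ` S"
      by (intro image_eqI[of _ _ "k - h"]) (auto simp: algebra_simps)
  qed (auto simp: algebra_simps)

lemma card_left: "finite S \<Longrightarrow> card {k. g - k \<in> S} \<le> card (S::'g::group_add set)"
  unfolding left_set by (rule card_image_le)

lemma card_right: "finite S \<Longrightarrow> card {k. k - h \<in> S} \<le> card (S::'g::group_add set)"
  unfolding right_set by (rule card_image_le)

lemma band_bounded:
  assumes "band K S" "\<And>x g h. cmod (K x g h) \<le> M" "0 \<le> M"
  shows "kbounded K"
  unfolding kbounded_def bdd_above_def
proof (intro exI[of _ "M * card S"] ballI)
  fix r assume "r \<in> kvals K"
  then obtain x \<eta> \<xi> where r: "r = cmod (kform K x \<eta> \<xi>)" and u: "fin_unit \<eta>" "fin_unit \<xi>"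
    by (auto simp: kvals_def)
  define E where "E = {g. \<eta> g \<noteq> 0}"
  define D where "D = {g. \<xi> g \<noteq> 0}"
  have fE: "finite E" and fD: "finite D" and sE: "(\<Sum>g\<in>E. (cmod (\<eta> g))\<^sup>2) \<le> 1"
    and sD: "(\<Sum>g\<in>D. (cmod (\<xi> g))\<^sup>2) \<le> 1"
    using u by (auto simp: fin_unit_def E_def D_def)
  have fS: "finite S" using assms by (simp add: band_def)
  define a where "a = (\<lambda>g. (cmod (\<eta> g))\<^sup>2)"
  define b where "b = (\<lambda>h. (cmod (\<xi> h))\<^sup>2)"
  have "r \<le> (\<Sum>g\<in>E. cmod (\<Sum>h\<in>D. cnj (\<eta> g) * K x g h * \<xi> h))"
    unfolding r kform_def E_def[symmetric] D_def[symmetric] by (rule norm_sum)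
  also have "\<dots> \<le> (\<Sum>g\<in>E. \<Sum>h\<in>D. cmod (cnj (\<eta> g) * K x g h * \<xi> h))"
    by (intro sum_mono norm_sum)
  also have "\<dots> \<le> (\<Sum>g\<in>E. \<Sum>h\<in>D. (if g - h \<in> S then M / 2 * a g else 0) + (if g - h \<in> S then M / 2 * b h else 0))"
  proof (intro sum_mono)
    fix g h
    show "cmod (cnj (\<eta> g) * K x g h * \<xi> h) \<le> (if g - h \<in> S then M / 2 * a g else 0) + (if g - h \<in> S then M / 2 * b h else 0)"
    proof (cases "g - h \<in> S")
      case False
      then have "K x g h = 0" using assms(1) by (auto simp: band_def)
      then show ?thesis using False by simp
    next
      case True
      have "cmod (cnj (\<eta> g) * K x g h * \<xi> h) = cmod (\<eta> g) * cmod (K x g h) * cmod (\<xi> h)"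
        by (simp add: norm_mult)
      also have "\<dots> \<le> cmod (\<eta> g) * M * cmod (\<xi> h)"
        by (intro mult_right_mono mult_left_mono assms(2)) auto
      also have "\<dots> \<le> M / 2 * a g + M / 2 * b h"
      proof -
        have "2 * (cmod (\<eta> g) * cmod (\<xi> h)) \<le> a g + b h"
          unfolding a_def b_def using sum_squares_bound[of "cmod (\<eta> g)" "cmod (\<xi> h)"]
          by (simp add: power2_eq_square)
        then have "M * (2 * (cmod (\<eta> g) * cmod (\<xi> h))) \<le> M * (a g + b h)"
          using assms(3) by (rule mult_left_mono)
        then show ?thesis by (simp add: algebra_simps)
      qed
      finally show ?thesis using True by simp
    qed
  qed
  also have "\<dots> = (\<Sum>g\<in>E. \<Sum>h\<in>D. (if g - h \<in> S then M / 2 * a g else 0)) + (\<Sum>h\<in>D. \<Sum>g\<in>E. (if g - h \<in> S then M / 2 * b h else 0))"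
    by (simp add: sum.distrib sum.swap[of _ D E])
  also have "\<dots> = (\<Sum>g\<in>E. M / 2 * a g * card {h\<in>D. g - h \<in> S}) + (\<Sum>h\<in>D. M / 2 * b h * card {g\<in>E. g - h \<in> S})"
    using fE fD by (simp add: sum.inter_filter[symmetric] mult.commute)
  also have "\<dots> \<le> (\<Sum>g\<in>E. M / 2 * a g * card S) + (\<Sum>h\<in>D. M / 2 * b h * card S)"
  proof (intro add_mono sum_mono mult_left_mono)
    fix g h
    have "card {h\<in>D. g - h \<in> S} \<le> card {h. g - h \<in> S}"
      using fS by (intro card_mono) (auto simp: finite_left)
    then show "real (card {h\<in>D. g - h \<in> S}) \<le> real (card S)" using card_left[OF fS, of g] by linarith
    have "card {g\<in>E. g - h \<in> S} \<le> card {g. g - h \<in> S}"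
      using fS by (intro card_mono) (auto simp: finite_right)
    then show "real (card {g\<in>E. g - h \<in> S}) \<le> real (card S)" using card_right[OF fS, of h] by linarith
  qed (auto simp: a_def b_def assms(3))
  also have "\<dots> = M / 2 * card S * (\<Sum>g\<in>E. a g) + M / 2 * card S * (\<Sum>h\<in>D. b h)"
    by (simp add: sum_distrib_left sum_distrib_right sum_divide_distrib mult_ac)
  also have "\<dots> \<le> M / 2 * card S * 1 + M / 2 * card S * 1"
    using sE sD assms(3) by (intro add_mono mult_left_mono) (auto simp: a_def b_def)
  finally show "r \<le> M * card S" by simp
qed



definition ck :: "('g::group_add \<Rightarrow> 'x \<Rightarrow> 'x) \<Rightarrow> ('g \<Rightarrow> 'x \<Rightarrow> complex) \<Rightarrow> ('g, 'x) kernel" where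
  "ck \<alpha> F = (\<lambda>x g h. F (g - h) (\<alpha> g x))"

definition spt :: "('g \<Rightarrow> 'x \<Rightarrow> complex) \<Rightarrow> 'g set" where
  "spt F = {s. F s \<noteq> (\<lambda>_. 0)}"

definition cpf :: "('g \<Rightarrow> 'x::topological_space \<Rightarrow> complex) \<Rightarrow> bool" where
  "cpf F \<longleftrightarrow> finite (spt F) \<and> (\<forall>s. continuous_on UNIV (F s))"

lemma cp_alg_iff: "K \<in> cp_alg \<alpha> \<longleftrightarrow> (\<exists>F. K = ck \<alpha> F \<and> cpf F)"
  by (auto simp: cp_alg_def ck_def cpf_def spt_def)

lemma band_ck: "cpf F \<Longrightarrow> band (ck \<alpha> F) (spt F)"
  by (auto simp: band_def cpf_def ck_def spt_def)

lemma cp_band: "K \<in> cp_alg \<alpha> \<Longrightarrow> \<exists>S. band K S"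
  using band_ck cp_alg_iff by metis

lemma act_add: "cont_action \<alpha> \<Longrightarrow> \<alpha> (g + h) y = \<alpha> g (\<alpha> h y)"
  by (simp add: cont_action_def)

lemma act_0: "cont_action \<alpha> \<Longrightarrow> \<alpha> 0 y = y"
  by (simp add: cont_action_def)

lemma act_cont: "cont_action \<alpha> \<Longrightarrow> continuous_on UNIV (\<alpha> g)"
  by (simp add: cont_action_def)

lemma act_inv: "cont_action \<alpha> \<Longrightarrow> \<alpha> (- g) (\<alpha> g y) = y"
  by (metis act_add act_0 left_minus)

lemma act_inv': "cont_action \<alpha> \<Longrightarrow> \<alpha> g (\<alpha> (- g) y) = y"
  by (metis act_add act_0 right_minus)

lemma cont_comp_act: "cont_action \<alpha> \<Longrightarrow> continuous_on UNIV f \<Longrightarrow> continuous_on UNIV (\<lambda>y. f (\<alpha> g y))"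
  by (rule continuous_on_compose2[OF _ act_cont]) auto

definition cconv where
  "cconv \<alpha> F G = (\<lambda>s y. \<Sum>t\<in>spt F. F t y * G (- t + s) (\<alpha> (- t) y))"

lemma ck_kmult:
  assumes "cont_action \<alpha>" "cpf F"
  shows "kmult (ck \<alpha> F) (ck \<alpha> G) = ck \<alpha> (cconv \<alpha> F G)"
proof (intro ext)
  fix x g h
  have fS: "finite (spt F)" using assms by (simp add: cpf_def)
  have "kmult (ck \<alpha> F) (ck \<alpha> G) x g h = (\<Sum>k\<in>{k. g - k \<in> spt F}. ck \<alpha> F x g k * ck \<alpha> G x k h)"
    using fS by (intro kmult_band_left[OF band_ck[OF assms(2)]]) (auto simp: finite_left)
  also have "\<dots> = (\<Sum>t\<in>spt F. ck \<alpha> F x g (- t + g) * ck \<alpha> G x (- t + g) h)"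
    unfolding left_set by (subst sum.reindex) (simp_all add: inj_on_def)
  also have "\<dots> = cconv \<alpha> F G (g - h) (\<alpha> g x)"
  proof -
    have e1: "(- t + g) - h = - t + (g - h)" for t by (metis add.assoc diff_conv_add_uminus)
    have e2: "\<alpha> (- t + g) x = \<alpha> (- t) (\<alpha> g x)" for t by (rule act_add[OF assms(1)])
    show ?thesis unfolding cconv_def ck_def e1 e2 diff_left_cancel' by (rule refl)
  qed
  finally show "kmult (ck \<alpha> F) (ck \<alpha> G) x g h = ck \<alpha> (cconv \<alpha> F G) x g h"
    by (simp add: ck_def)
qed

lemma cpf_cconv:
  assumes "cont_action \<alpha>" "cpf F" "cpf G"
  shows "cpf (cconv \<alpha> F G)"
proof -
  have fF: "finite (spt F)" and fG: "finite (spt G)" using assms by (auto simp: cpf_def)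
  have "spt (cconv \<alpha> F G) \<subseteq> (\<lambda>(t, u). t + u) ` (spt F \<times> spt G)"
  proof
    fix s assume "s \<in> spt (cconv \<alpha> F G)"
    then obtain y where "cconv \<alpha> F G s y \<noteq> 0" by (auto simp: spt_def)
    then obtain t where t: "t \<in> spt F" "G (- t + s) (\<alpha> (- t) y) \<noteq> 0"
      unfolding cconv_def by (metis (no_types, lifting) mult_zero_right sum.neutral)
    then have "- t + s \<in> spt G" by (auto simp: spt_def)
    moreover have "s = t + (- t + s)" by (simp add: add.assoc[symmetric])
    ultimately show "s \<in> (\<lambda>(t, u). t + u) ` (spt F \<times> spt G)" using t(1)
      by (intro image_eqI[of _ _ "(t, - t + s)"]) simp_all
  qed
  then have "finite (spt (cconv \<alpha> F G))"
    by (rule finite_subset) (intro finite_imageI finite_cartesian_product fF fG)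
  moreover have "continuous_on UNIV (cconv \<alpha> F G s)" for s
  proof -
    have "continuous_on UNIV (\<lambda>y. F t y * G (- t + s) (\<alpha> (- t) y))" for t
    proof (rule continuous_on_mult)
      show "continuous_on UNIV (F t)" using assms by (simp add: cpf_def)
      show "continuous_on UNIV (\<lambda>y. G (- t + s) (\<alpha> (- t) y))"
        using assms by (intro cont_comp_act[OF assms(1), of "G (- t + s)"]) (simp add: cpf_def)
    qed
    then show ?thesis unfolding cconv_def by (rule continuous_on_sum)
  qed
  ultimately show ?thesis by (simp add: cpf_def)
qed

lemma cp_kmult:
  assumes "cont_action \<alpha>" "K \<in> cp_alg \<alpha>" "L \<in> cp_alg \<alpha>"
  shows "kmult K L \<in> cp_alg \<alpha>"
  using assms ck_kmult cpf_cconv unfolding cp_alg_iff by metis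

definition cadj where
  "cadj \<alpha> F = (\<lambda>s y. cnj (F (- s) (\<alpha> (- s) y)))"

lemma ck_kadj:
  fixes \<alpha> :: "'g::group_add \<Rightarrow> 'x::topological_space \<Rightarrow> 'x"
  assumes "cont_action \<alpha>"
  shows "kadj (ck \<alpha> F) = ck \<alpha> (cadj \<alpha> F)"
proof (intro ext)
  fix x :: 'x and g h :: 'g
  have e: "- (g - h) + g = h" by (simp add: minus_add add.assoc)
  have "\<alpha> h x = \<alpha> (- (g - h)) (\<alpha> g x)"
    using act_add[OF assms, of "- (g - h)" g x] e by simp
  then show "kadj (ck \<alpha> F) x g h = ck \<alpha> (cadj \<alpha> F) x g h"
    by (simp add: kadj_def ck_def cadj_def minus_diff_eq)
qed

lemma cpf_cadj:
  assumes "cont_action \<alpha>" "cpf F"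
  shows "cpf (cadj \<alpha> F)"
proof -
  have "spt (cadj \<alpha> F) \<subseteq> uminus ` spt F"
  proof
    fix s assume "s \<in> spt (cadj \<alpha> F)"
    then obtain y where "cadj \<alpha> F s y \<noteq> 0" by (auto simp: spt_def)
    then have "- s \<in> spt F" by (auto simp: cadj_def spt_def)
    then show "s \<in> uminus ` spt F" by (metis image_eqI minus_minus)
  qed
  then have "finite (spt (cadj \<alpha> F))" using assms by (meson cpf_def finite_imageI finite_subset)
  moreover have "continuous_on UNIV (cadj \<alpha> F s)" for s
    unfolding cadj_def using assms
    by (intro continuous_on_cnj cont_comp_act[OF assms(1), of "F (- s)"]) (auto simp: cpf_def)
  ultimately show ?thesis by (simp add: cpf_def)
qed

lemma cp_kadj:
  assumes "cont_action \<alpha>" "K \<in> cp_alg \<alpha>"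
  shows "kadj K \<in> cp_alg \<alpha>"
  using assms ck_kadj cpf_cadj unfolding cp_alg_iff by metis

lemma cp_ksub:
  fixes \<alpha> :: "'g::group_add \<Rightarrow> 'x::topological_space \<Rightarrow> 'x"
  assumes "K \<in> cp_alg \<alpha>" "L \<in> cp_alg \<alpha>"
  shows "ksub K L \<in> cp_alg \<alpha>"
proof -
  obtain F G where K: "K = ck \<alpha> F" "cpf F" and L: "L = ck \<alpha> G" "cpf G"
    using assms cp_alg_iff by metis
  define H :: "'g \<Rightarrow> 'x \<Rightarrow> complex" where "H = (\<lambda>s y. F s y - G s y)"
  have "ksub K L = ck \<alpha> H" by (simp add: K L ksub_def ck_def H_def)
  moreover have "spt H \<subseteq> spt F \<union> spt G" by (auto simp: spt_def H_def)
  then have "cpf H" using K L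
    by (auto simp: cpf_def H_def intro: continuous_on_diff finite_subset)
  ultimately show ?thesis using cp_alg_iff by metis
qed

lemma cp_kfun:
  fixes \<alpha> :: "'g::group_add \<Rightarrow> 'x::topological_space \<Rightarrow> 'x"
  assumes "continuous_on UNIV f"
  shows "kfun \<alpha> f \<in> cp_alg \<alpha>"
proof -
  define H :: "'g \<Rightarrow> 'x \<Rightarrow> complex" where "H = (\<lambda>s. if s = 0 then f else (\<lambda>_. 0))"
  have "kfun \<alpha> f = ck \<alpha> H" by (auto simp: kfun_def ck_def H_def fun_eq_iff)
  moreover have "spt H \<subseteq> {0}" by (auto simp: spt_def H_def)
  then have "cpf H" using assms by (auto simp: cpf_def H_def intro: finite_subset)
  ultimately show ?thesis using cp_alg_iff by metis
qed

lemma cp_bounded: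
  assumes "compact (UNIV :: 'x::topological_space set)" "K \<in> cp_alg (\<alpha> :: 'g::group_add \<Rightarrow> 'x \<Rightarrow> 'x)"
  shows "kbounded K"
proof -
  obtain F where K: "K = ck \<alpha> F" "cpf F" using assms cp_alg_iff by metis
  have "\<exists>B. \<forall>y. cmod (F s y) \<le> B" for s
  proof -
    have "compact (F s ` UNIV)" using K assms by (intro compact_continuous_image) (auto simp: cpf_def)
    then show ?thesis by (meson bounded_iff compact_imp_bounded rangeI)
  qed
  then obtain B where B: "\<And>s y. cmod (F s y) \<le> B s" by metis
  define M where "M = (\<Sum>s\<in>spt F. \<bar>B s\<bar>)"
  have "cmod (K x g h) \<le> M" for x g h
  proof (cases "g - h \<in> spt F")
    case True
    then have "cmod (K x g h) \<le> \<bar>B (g - h)\<bar>" using B[of "g - h" "\<alpha> g x"] by (simp add: K ck_def)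
    also have "\<dots> \<le> M" unfolding M_def using True K by (intro member_le_sum) (auto simp: cpf_def)
    finally show ?thesis .
  next
    case False
    then have "K x g h = 0" by (simp add: K ck_def spt_def)
    then show ?thesis by (simp add: M_def sum_nonneg)
  qed
  moreover have "0 \<le> M" unfolding M_def by (simp add: sum_nonneg)
  ultimately show ?thesis using band_bounded[OF band_ck[OF K(2)]] K by blast
qed

lemma knorm_zero: "knorm ((\<lambda>x g h. 0) :: ('g, 'x) kernel) = 0"
proof -
  have "kvals ((\<lambda>x g h. 0) :: ('g, 'x) kernel) = {0}"
    unfolding kvals_def kform_def
    by (auto intro!: exI[of _ "\<lambda>_. 0"] simp: fin_unit_def)
  then show ?thesis by (simp add: knorm_def cSup_singleton)
qed

lemma cp_crossed:
  assumes "compact (UNIV :: 'x::topological_space set)" "K \<in> cp_alg (\<alpha> :: 'g::group_add \<Rightarrow> 'x \<Rightarrow> 'x)"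
  shows "K \<in> crossed_prod \<alpha>"
proof -
  have "ksub K K = (\<lambda>x g h. 0)" by (simp add: ksub_def)
  then have "\<forall>\<epsilon>>0. \<exists>L\<in>cp_alg \<alpha>. knorm (ksub K L) < \<epsilon>"
    using assms(2) knorm_zero by metis
  then show ?thesis using assms cp_bounded unfolding crossed_prod_def by blast
qed



lemma normal_euclidean:
  assumes "compact (UNIV :: 'x::t2_space set)"
  shows "normal_space (euclidean :: 'x topology)"
proof (rule compact_Hausdorff_or_regular_imp_normal_space)
  show "compact_space (euclidean :: 'x topology)"
    using assms by (simp add: compact_space_def)
  show "Hausdorff_space (euclidean :: 'x topology) \<or> regular_space euclidean"
    unfolding Hausdorff_space_def disjnt_def using hausdorff by auto
qed

lemma urysohn_point:
  fixes V :: "'x::t2_space set"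
  assumes "compact (UNIV :: 'x set)" "open V" "y \<in> V"
  obtains f :: "'x \<Rightarrow> real" where "continuous_on UNIV f" "\<And>z. 0 \<le> f z" "f y = 1"
    "\<And>z. z \<notin> V \<Longrightarrow> f z = 0"
proof -
  have "closedin euclidean (- V)" using assms by (simp add: closed_closedin[symmetric] closed_Compl)
  moreover have "closedin euclidean {y}" by (simp add: closed_closedin[symmetric])
  moreover have "disjnt (- V) {y}" using assms by (simp add: disjnt_def)
  ultimately obtain f where f: "continuous_map euclidean (top_of_set {0..1::real}) f"
      "f ` (- V) \<subseteq> {0}" "f ` {y} \<subseteq> {1}"
    using Urysohn_lemma[OF normal_euclidean[OF assms(1)], of "- V" "{y}" 0 1] by auto
  have "continuous_map euclidean euclidean f" and rng: "f \<in> UNIV \<rightarrow> {0..1}"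
    using f(1) unfolding continuous_map_in_subtopology by auto
  then have "continuous_on UNIV f" using continuous_map_iff_continuous[of UNIV f] by simp
  moreover have "\<And>z. 0 \<le> f z" using rng by auto
  ultimately show ?thesis using that f(2,3) by auto
qed

lemma pou:
  fixes V :: "'i \<Rightarrow> 'x::t2_space set"
  assumes "compact (UNIV :: 'x set)" "finite S" "\<And>t. t \<in> S \<Longrightarrow> open (V t)"
    "\<And>y. \<exists>t\<in>S. y \<in> V t"
  obtains H :: "'i \<Rightarrow> 'x \<Rightarrow> real" where "\<And>t. continuous_on UNIV (H t)"
    "\<And>t y. H t y \<noteq> 0 \<Longrightarrow> y \<in> V t" "\<And>y. (\<Sum>t\<in>S. (H t y)\<^sup>2) = 1"
proof -
  obtain tt where tt: "\<And>y. tt y \<in> S" "\<And>y. y \<in> V (tt y)" using assms(4) by metis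
  have "\<forall>y. \<exists>f :: 'x \<Rightarrow> real. continuous_on UNIV f \<and> (\<forall>z. 0 \<le> f z) \<and> f y = 1 \<and> (\<forall>z. z \<notin> V (tt y) \<longrightarrow> f z = 0)"
  proof
    fix y
    show "\<exists>f :: 'x \<Rightarrow> real. continuous_on UNIV f \<and> (\<forall>z. 0 \<le> f z) \<and> f y = 1 \<and> (\<forall>z. z \<notin> V (tt y) \<longrightarrow> f z = 0)"
      using urysohn_point[OF assms(1) assms(3)[OF tt(1)] tt(2), of y] by metis
  qed
  then have "\<exists>f :: 'x \<Rightarrow> 'x \<Rightarrow> real. \<forall>y. continuous_on UNIV (f y) \<and> (\<forall>z. 0 \<le> f y z) \<and> f y y = 1 \<and> (\<forall>z. z \<notin> V (tt y) \<longrightarrow> f y z = 0)"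
    by (rule choice)
  then obtain f :: "'x \<Rightarrow> 'x \<Rightarrow> real" where f0: "\<forall>y. continuous_on UNIV (f y) \<and> (\<forall>z. 0 \<le> f y z) \<and> f y y = 1 \<and> (\<forall>z. z \<notin> V (tt y) \<longrightarrow> f y z = 0)"
    by blast
  then have f: "\<And>y. continuous_on UNIV (f y)" "\<And>y z. 0 \<le> f y z" "\<And>y. f y y = 1"
    "\<And>y z. z \<notin> V (tt y) \<Longrightarrow> f y z = 0" by auto
  have opn: "open (f y -` {1/2<..})" if "y \<in> UNIV" for y by (rule open_vimage) (simp_all add: f(1))
  have cov: "UNIV \<subseteq> (\<Union>y\<in>UNIV. f y -` {1/2<..})"
  proof
    fix z :: 'x
    show "z \<in> (\<Union>y\<in>UNIV. f y -` {1/2<..})" using f(3)[of z] by (intro UN_I[of z]) simp_all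
  qed
  obtain Y where Y0: "Y \<subseteq> UNIV" and Y: "finite Y" "UNIV \<subseteq> (\<Union>y\<in>Y. f y -` {1/2<..})"
    by (rule compactE_image[OF assms(1) opn cov])
  define \<psi> where "\<psi> = (\<lambda>t z. \<Sum>y\<in>{y\<in>Y. tt y = t}. f y z)"
  have psi_nn: "0 \<le> \<psi> t z" for t z unfolding \<psi>_def by (simp add: sum_nonneg f(2))
  have psi_cont: "continuous_on UNIV (\<psi> t)" for t
    unfolding \<psi>_def by (rule continuous_on_sum) (simp add: f(1))
  have psi_supp: "z \<in> V t" if "\<psi> t z \<noteq> 0" for t z
  proof -
    have "\<exists>y\<in>{y\<in>Y. tt y = t}. f y z \<noteq> 0"
    proof (rule ccontr)
      assume "\<not> (\<exists>y\<in>{y\<in>Y. tt y = t}. f y z \<noteq> 0)"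
      then have "\<psi> t z = 0" unfolding \<psi>_def by (intro sum.neutral) blast
      then show False using that by simp
    qed
    then obtain y where y: "y \<in> {y\<in>Y. tt y = t}" "f y z \<noteq> 0" by blast
    then have "z \<in> V (tt y)" using f(4) by blast
    then show ?thesis using y(1) by simp
  qed
  define \<Sigma> where "\<Sigma> = (\<lambda>z. \<Sum>t\<in>S. \<psi> t z)"
  have Sig_pos: "0 < \<Sigma> z" for z
  proof -
    have "z \<in> (\<Union>y\<in>Y. f y -` {1/2<..})" using Y(2) by blast
    then obtain y where y: "y \<in> Y" "f y z > 1/2" by blast
    have "f y z \<le> \<psi> (tt y) z" unfolding \<psi>_def using y Y(1) f(2)
      by (intro member_le_sum) auto
    also have "\<dots> \<le> \<Sigma> z" unfolding \<Sigma>_def using assms(2) tt(1) psi_nn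
      by (intro member_le_sum) auto
    finally show ?thesis using y by linarith
  qed
  define H where "H = (\<lambda>t z. sqrt (\<psi> t z / \<Sigma> z))"
  have "continuous_on UNIV (H t)" for t
  proof -
    have "continuous_on UNIV \<Sigma>" unfolding \<Sigma>_def by (rule continuous_on_sum) (rule psi_cont)
    then have "continuous_on UNIV (\<lambda>z. \<psi> t z / \<Sigma> z)"
      using psi_cont Sig_pos by (intro continuous_on_divide) (auto, metis less_irrefl)
    then show ?thesis unfolding H_def by (rule continuous_on_real_sqrt)
  qed
  moreover have "H t y \<noteq> 0 \<Longrightarrow> y \<in> V t" for t y using psi_supp by (auto simp: H_def)
  moreover have "(\<Sum>t\<in>S. (H t y)\<^sup>2) = 1" for y
  proof -
    have "(\<Sum>t\<in>S. (H t y)\<^sup>2) = (\<Sum>t\<in>S. \<psi> t y / \<Sigma> y)"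
      unfolding H_def using psi_nn Sig_pos by (intro sum.cong refl) (simp add: less_imp_le)
    also have "\<dots> = (\<Sum>t\<in>S. \<psi> t y) / \<Sigma> y" by (rule sum_divide_distrib[symmetric])
    also have "\<dots> = 1" using Sig_pos[of y] unfolding \<Sigma>_def by simp
    finally show ?thesis .
  qed
  ultimately show ?thesis using that by blast
qed



lemma kadj_kfun: "kadj (kfun \<alpha> a) = kfun \<alpha> (\<lambda>y. cnj (a y))"
  by (auto simp: kadj_def kfun_def fun_eq_iff)

lemma kmult_kfun_kfun: "kmult (kfun \<alpha> a) (kfun \<alpha> b) = kfun \<alpha> (\<lambda>y. a y * b y)"
  unfolding kmult_kfun_left by (auto simp: kfun_def fun_eq_iff)

lemma kadj_ksub: "kadj (ksub K L) = ksub (kadj K) (kadj L)"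
  by (simp add: kadj_def ksub_def)

lemma kmult_nonzero:
  assumes "band K S" "kmult K L x g h \<noteq> 0"
  shows "\<exists>k. K x g k \<noteq> 0 \<and> L x k h \<noteq> 0"
proof (rule ccontr)
  assume a: "\<not> (\<exists>k. K x g k \<noteq> 0 \<and> L x k h \<noteq> 0)"
  have fin: "finite {k. g - k \<in> S}" using assms by (simp add: band_def finite_left)
  have "kmult K L x g h = (\<Sum>k\<in>{k. g - k \<in> S}. K x g k * L x k h)"
    using assms fin by (intro kmult_band_left) auto
  also have "\<dots> = 0" using a by (intro sum.neutral) auto
  finally show False using assms by simp
qed



lemma main_construct:
  fixes \<alpha> :: "'g::group_add \<Rightarrow> 'x::t2_space \<Rightarrow> 'x" and W :: "'x set"
  assumes cpt: "compact (UNIV :: 'x set)" and act: "cont_action \<alpha>" and W: "open W" "W \<noteq> {}"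
    and dc: "dyn_comparison \<alpha>" and nm: "\<not> (\<exists>M. regular_borel_prob M \<and> invariant_measure \<alpha> M)"
  obtains H :: "'g \<Rightarrow> 'x \<Rightarrow> real" and S where "finite S" "\<And>t. continuous_on UNIV (H t)"
    "\<And>t y. H t y \<noteq> 0 \<Longrightarrow> t \<in> S \<and> \<alpha> t y \<in> W"
    "\<forall>t y t' y'. H t y \<noteq> 0 \<and> H t' y' \<noteq> 0 \<and> \<alpha> t y = \<alpha> t' y' \<longrightarrow> t = t'"
    "\<And>y. (\<Sum>t\<in>S. (H t y)\<^sup>2) = 1"
proof -
  have "subeq_open \<alpha> UNIV W" using dc nm W unfolding dyn_comparison_def by blast
  then have "subeq_closed \<alpha> UNIV W" unfolding subeq_open_def by simp
  then obtain UU s where UU: "finite UU" "\<And>U. U \<in> UU \<Longrightarrow> open U" "UNIV \<subseteq> \<Union>UU"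
    "\<And>U. U \<in> UU \<Longrightarrow> \<alpha> (s U) ` U \<subseteq> W"
    "\<And>U U'. U \<in> UU \<Longrightarrow> U' \<in> UU \<Longrightarrow> U \<noteq> U' \<Longrightarrow> \<alpha> (s U) ` U \<inter> \<alpha> (s U') ` U' = {}"
    unfolding subeq_closed_def by metis
  define S where "S = s ` UU"
  define V where "V = (\<lambda>t. \<Union>{U\<in>UU. s U = t})"
  have fS: "finite S" using UU(1) by (simp add: S_def)
  have oV: "open (V t)" if "t \<in> S" for t unfolding V_def using UU(2) by (intro open_Union) blast
  have cV: "\<exists>t\<in>S. y \<in> V t" for y
  proof -
    obtain U where "U \<in> UU" "y \<in> U" using UU(3) by blast
    then show ?thesis unfolding S_def V_def by blast
  qed
  obtain H :: "'g \<Rightarrow> 'x \<Rightarrow> real" where H: "\<And>t. continuous_on UNIV (H t)"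
    "\<And>t y. H t y \<noteq> 0 \<Longrightarrow> y \<in> V t" "\<And>y. (\<Sum>t\<in>S. (H t y)\<^sup>2) = 1"
    using pou[OF cpt fS oV cV] by metis
  show ?thesis
  proof (rule that[OF fS H(1) _ _ H(3)])
    fix t y assume "H t y \<noteq> 0"
    then have "y \<in> V t" by (rule H(2))
    then obtain U where U: "U \<in> UU" "s U = t" "y \<in> U" unfolding V_def by blast
    then show "t \<in> S \<and> \<alpha> t y \<in> W" using UU(4)[OF U(1)] unfolding S_def by blast
  next
    show "\<forall>t y t' y'. H t y \<noteq> 0 \<and> H t' y' \<noteq> 0 \<and> \<alpha> t y = \<alpha> t' y' \<longrightarrow> t = t'"
    proof (intro allI impI, elim conjE)
    fix t y t' y' assume a: "H t y \<noteq> 0" "H t' y' \<noteq> 0" "\<alpha> t y = \<alpha> t' y'"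
    from H(2)[OF a(1)] obtain U where U: "U \<in> UU" "s U = t" "y \<in> U" unfolding V_def by blast
    from H(2)[OF a(2)] obtain U' where U': "U' \<in> UU" "s U' = t'" "y' \<in> U'" unfolding V_def by blast
    have "\<alpha> t y \<in> \<alpha> (s U) ` U \<inter> \<alpha> (s U') ` U'" using U U' a(3) by (metis IntI image_eqI)
    then have "U = U'" using UU(5)[OF U(1) U'(1)] by blast
    then show "t = t'" using U U' by simp
    qed
  qed
qed



lemma isometry_construct:
  fixes \<alpha> :: "'g::group_add \<Rightarrow> 'x::t2_space \<Rightarrow> 'x" and W :: "'x set"
    and H :: "'g \<Rightarrow> 'x \<Rightarrow> real"
  assumes act: "cont_action \<alpha>" and fS: "finite S" and Hc: "\<And>t. continuous_on UNIV (H t)"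
    and HS: "\<And>t y. H t y \<noteq> 0 \<Longrightarrow> t \<in> S \<and> \<alpha> t y \<in> W"
    and Hd: "\<forall>t y t' y'. H t y \<noteq> 0 \<and> H t' y' \<noteq> 0 \<and> \<alpha> t y = \<alpha> t' y' \<longrightarrow> t = t'"
    and H1: "\<And>y. (\<Sum>t\<in>S. (H t y)\<^sup>2) = 1"
  obtains v where "v \<in> cp_alg \<alpha>" "kmult (kadj v) v = kid"
    "\<And>x g h. kmult v (kadj v) x g h \<noteq> 0 \<Longrightarrow> \<alpha> g x \<in> W \<and> \<alpha> h x \<in> W"
proof -
  define F :: "'g \<Rightarrow> 'x \<Rightarrow> complex" where "F = (\<lambda>t y. complex_of_real (H t (\<alpha> (- t) y)))"
  define v where "v = ck \<alpha> F"
  have comp: "\<alpha> (a - b) (\<alpha> b x) = \<alpha> a x" for a b x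
    using act_add[OF act, of "a - b" b x] by simp
  have ve: "v x g k = complex_of_real (H (g - k) (\<alpha> k x))" for x g k
  proof -
    have "\<alpha> (- (g - k)) (\<alpha> g x) = \<alpha> k x"
      using act_add[OF act, of "- (g - k)" g x] by (simp add: minus_add add.assoc)
    then show ?thesis by (simp add: v_def ck_def F_def)
  qed
  have cF: "cpf F"
  proof -
    have "spt F \<subseteq> S"
    proof
      fix t assume "t \<in> spt F"
      then obtain y where "F t y \<noteq> 0" by (auto simp: spt_def)
      then show "t \<in> S" using HS by (auto simp: F_def)
    qed
    then have "finite (spt F)" using fS by (rule finite_subset)
    moreover have "continuous_on UNIV (F t)" for t
      unfolding F_def continuous_on_of_real_o_iff by (rule cont_comp_act[OF act Hc])
    ultimately show ?thesis by (simp add: cpf_def)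
  qed
  have vcp: "v \<in> cp_alg \<alpha>" using cF cp_alg_iff v_def by metis
  have iso: "kmult (kadj v) v = kid"
  proof (intro ext)
    fix x g h
    define A where "A = {k. k - h \<in> S}"
    have fA: "finite A" using fS by (simp add: A_def finite_right)
    have "kmult (kadj v) v x g h = (\<Sum>k\<in>A. kadj v x g k * v x k h)"
    proof (rule kmult_eq_sum[OF fA])
      fix k assume "k \<notin> A"
      then have "v x k h = 0" using HS[of "k - h" "\<alpha> h x"] by (auto simp: A_def ve)
      then show "kadj v x g k * v x k h = 0" by simp
    qed
    also have "\<dots> = (\<Sum>k\<in>A. complex_of_real (H (k - g) (\<alpha> g x) * H (k - h) (\<alpha> h x)))"
      by (simp add: kadj_def ve)
    also have "\<dots> = kid x g h"
    proof (cases "g = h")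
      case True
      have "(\<Sum>k\<in>A. complex_of_real (H (k - g) (\<alpha> g x) * H (k - h) (\<alpha> h x)))
          = (\<Sum>t\<in>S. complex_of_real ((H t (\<alpha> h x))\<^sup>2))"
        unfolding A_def right_set True
        by (subst sum.reindex) (simp_all add: inj_on_def power2_eq_square)
      also have "\<dots> = complex_of_real (\<Sum>t\<in>S. (H t (\<alpha> h x))\<^sup>2)" by (simp only: of_real_sum)
      also have "\<dots> = 1" by (simp only: H1 of_real_1)
      finally show ?thesis using True by (simp add: kid_def)
    next
      case False
      have "H (k - g) (\<alpha> g x) * H (k - h) (\<alpha> h x) = 0" for k
      proof (rule ccontr)
        assume "H (k - g) (\<alpha> g x) * H (k - h) (\<alpha> h x) \<noteq> 0"
        then have n: "H (k - g) (\<alpha> g x) \<noteq> 0" "H (k - h) (\<alpha> h x) \<noteq> 0" by auto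
        have "\<alpha> (k - g) (\<alpha> g x) = \<alpha> (k - h) (\<alpha> h x)" by (simp add: comp)
        then have "k - g = k - h" using Hd n by blast
        then have "g = h" by (metis diff_add_cancel add_diff_cancel minus_diff_eq diff_diff_eq2 eq_neg_iff_add_eq_0 minus_add add_left_cancel diff_conv_add_uminus neg_equal_iff_equal)
        then show False using False by simp
      qed
      then have "(\<Sum>k\<in>A. complex_of_real (H (k - g) (\<alpha> g x) * H (k - h) (\<alpha> h x))) = 0"
        by (intro sum.neutral) simp
      then show ?thesis using False by (simp add: kid_def)
    qed
    finally show "kmult (kadj v) v x g h = kid x g h" .
  qed
  have supp: "\<alpha> g x \<in> W \<and> \<alpha> h x \<in> W" if nz: "kmult v (kadj v) x g h \<noteq> 0" for x g h
  proof -
    obtain k where k: "v x g k \<noteq> 0" "kadj v x k h \<noteq> 0"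
      using kmult_nonzero[OF band_ck[OF cF] nz[unfolded v_def]] unfolding v_def by blast
    have "H (g - k) (\<alpha> k x) \<noteq> 0" "H (h - k) (\<alpha> k x) \<noteq> 0" using k by (auto simp: ve kadj_def)
    then show ?thesis using HS comp by metis
  qed
  show ?thesis using that vcp iso supp by blast
qed



lemma kpos_kfun:
  fixes \<alpha> :: "'g::group_add \<Rightarrow> 'x::topological_space \<Rightarrow> 'x"
  assumes cpt: "compact (UNIV :: 'x set)" and rc: "continuous_on UNIV r" and rn: "\<And>y. 0 \<le> r y"
  shows "kpos (crossed_prod \<alpha>) (kfun \<alpha> (\<lambda>y. complex_of_real (r y)))"
proof -
  define c where "c = kfun \<alpha> (\<lambda>y. complex_of_real (sqrt (r y)))"
  have "continuous_on UNIV (\<lambda>y. complex_of_real (sqrt (r y)))"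
    unfolding continuous_on_of_real_o_iff by (rule continuous_on_real_sqrt[OF rc])
  then have cA: "c \<in> crossed_prod \<alpha>" unfolding c_def by (intro cp_crossed[OF cpt] cp_kfun)
  have "kmult (kadj c) c = kfun \<alpha> (\<lambda>y. complex_of_real (sqrt (r y)) * complex_of_real (sqrt (r y)))"
    unfolding c_def kadj_kfun kmult_kfun_kfun by simp
  also have "\<dots> = kfun \<alpha> (\<lambda>y. complex_of_real (r y))"
    by (simp only: of_real_mult[symmetric] real_sqrt_mult_self abs_of_nonneg[OF rn])
  finally show ?thesis using cA unfolding kpos_def by metis
qed

lemma kfun_cont:
  fixes \<alpha> :: "'g::group_add \<Rightarrow> 'x::topological_space \<Rightarrow> 'x"
  assumes cpt: "compact (UNIV :: 'x set)" and rc: "continuous_on UNIV r"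
  shows "kfun \<alpha> (\<lambda>y. complex_of_real (r y)) \<in> crossed_prod \<alpha>"
  using rc by (intro cp_crossed[OF cpt] cp_kfun) simp

theorem lemma3p2:
  fixes \<alpha> :: "'g::{group_add, countable} \<Rightarrow> 'x::t2_space \<Rightarrow> 'x"
    and \<phi> :: "'x \<Rightarrow> real"
  assumes "infinite (UNIV :: 'g set)"
    and "infinite (UNIV :: 'x set)"
    and "compact (UNIV :: 'x set)"
    and "cont_action \<alpha>"
    and "dyn_comparison \<alpha>"
    and "\<not> (\<exists>M. regular_borel_prob M \<and> invariant_measure \<alpha> M)"
    and "continuous_on UNIV \<phi>"
    and "\<forall>x. \<phi> x \<ge> 0"
    and "\<phi> \<noteq> (\<lambda>_. 0)"
  shows "\<exists>v\<in>crossed_prod \<alpha>. kmult (kadj v) v = kid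
           \<and> kmult v (kadj v) \<in> hereditary_gen (crossed_prod \<alpha>) (kfun \<alpha> (\<lambda>x. complex_of_real (\<phi> x)))"
proof -
  note cpt = assms(3) and act = assms(4) and \<phi>c = assms(7)
  obtain x0 where x0: "\<phi> x0 \<noteq> 0" using assms(9) by auto
  define \<delta> where "\<delta> = \<phi> x0 / 2"
  have \<delta>: "0 < \<delta>" using x0 assms(8) unfolding \<delta>_def by (metis half_gt_zero_iff less_eq_real_def)
  define W where "W = \<phi> -` {\<delta><..}"
  have oW: "open W" unfolding W_def by (rule open_vimage[OF _ \<phi>c]) simp
  have "x0 \<in> W" using \<delta> unfolding W_def \<delta>_def by simp
  then have neW: "W \<noteq> {}" by blast
  obtain S and H :: "'g \<Rightarrow> 'x \<Rightarrow> real" where HS: "finite S" "\<And>t. continuous_on UNIV (H t)"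
    "\<And>t y. H t y \<noteq> 0 \<Longrightarrow> t \<in> S \<and> \<alpha> t y \<in> W"
    "\<forall>t y t' y'. H t y \<noteq> 0 \<and> H t' y' \<noteq> 0 \<and> \<alpha> t y = \<alpha> t' y' \<longrightarrow> t = t'"
    "\<And>y. (\<Sum>t\<in>S. (H t y)\<^sup>2) = 1"
    by (rule main_construct[OF cpt act oW neW assms(5,6)], rule that)
  obtain v where v: "v \<in> cp_alg \<alpha>" "kmult (kadj v) v = kid"
    "\<And>x g h. kmult v (kadj v) x g h \<noteq> 0 \<Longrightarrow> \<alpha> g x \<in> W \<and> \<alpha> h x \<in> W"
  proof (rule isometry_construct[where H=H and S=S and W=W and \<alpha>=\<alpha>])
    show "cont_action \<alpha>" by (rule act)
    show "finite S" by (rule HS(1))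
    show "continuous_on UNIV (H t)" for t by (rule HS(2))
    show "t \<in> S \<and> \<alpha> t y \<in> W" if "H t y \<noteq> 0" for t y using that by (rule HS(3))
    show "\<forall>t y t' y'. H t y \<noteq> 0 \<and> H t' y' \<noteq> 0 \<and> \<alpha> t y = \<alpha> t' y' \<longrightarrow> t = t'" by (rule HS(4))
    show "(\<Sum>t\<in>S. (H t y)\<^sup>2) = 1" for y by (rule HS(5))
  qed (rule that)
  define A where "A = crossed_prod \<alpha>"
  define p where "p = kmult v (kadj v)"
  have vA: "v \<in> A" unfolding A_def by (rule cp_crossed[OF cpt v(1)])
  have vaA: "kadj v \<in> cp_alg \<alpha>" by (rule cp_kadj[OF act v(1)])
  have pcp: "p \<in> cp_alg \<alpha>" unfolding p_def by (rule cp_kmult[OF act v(1) vaA])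
  define f where "f = (\<lambda>y. min 1 (\<phi> y / \<delta>))"
  define w where "w = (\<lambda>y. sqrt (f y))"
  have fc: "continuous_on UNIV f" unfolding f_def
    by (intro continuous_on_min continuous_on_const continuous_on_divide \<phi>c) (use \<delta> in auto)
  have wc: "continuous_on UNIV w" unfolding w_def by (rule continuous_on_real_sqrt[OF fc])
  have fn: "0 \<le> f y" for y unfolding f_def using assms(8) \<delta> by simp
  have fW: "f y = 1" if "y \<in> W" for y using that \<delta> unfolding f_def W_def by simp
  have wW: "w y = 1" if "y \<in> W" for y using fW[OF that] unfolding w_def by simp
  have pW: "\<alpha> g x \<in> W \<and> \<alpha> h x \<in> W" if "p x g h \<noteq> 0" for x g h
    using v(3) that unfolding p_def by blast
  define a1 where "a1 = kfun \<alpha> (\<lambda>y. complex_of_real (f y))"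
  define Pw where "Pw = kfun \<alpha> (\<lambda>y. complex_of_real (w y))"
  have a1A: "a1 \<in> A" unfolding a1_def A_def by (rule kfun_cont[OF cpt fc])
  have PwA: "Pw \<in> cp_alg \<alpha>" unfolding Pw_def by (rule cp_kfun) (simp add: wc)
  have pA: "p \<in> A" unfolding A_def by (rule cp_crossed[OF cpt pcp])
  define d where "d = ksub Pw p"
  have dcp: "d \<in> cp_alg \<alpha>" unfolding d_def by (rule cp_ksub[OF PwA pcp])
  have dA: "d \<in> A" unfolding A_def by (rule cp_crossed[OF cpt dcp])
  obtain Sv where bv: "band v Sv" using cp_band[OF v(1)] by blast
  obtain Sva where bva: "band (kadj v) Sva" using cp_band[OF vaA] by blast
  obtain Sp where bp: "band p Sp" using cp_band[OF pcp] by blast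
  have bPw: "band Pw {0}" unfolding Pw_def by (rule band_kfun)
  have padj: "kadj p = p" unfolding p_def using kadj_kmult[OF bv bva] by simp
  have Pwadj: "kadj Pw = Pw" unfolding Pw_def kadj_kfun by simp
  have dadj: "kadj d = d" unfolding d_def kadj_ksub Pwadj padj ..
  have pp: "kmult p p = p"
  proof -
    have "kmult p p = kmult v (kmult (kadj v) p)"
      unfolding p_def by (rule kmult_assoc[OF bv bva bp[unfolded p_def]])
    also have "kmult (kadj v) p = kmult (kmult (kadj v) v) (kadj v)"
      unfolding p_def by (rule kmult_assoc[OF bva bv bva, symmetric])
    finally show ?thesis unfolding v(2) kmult_kid_left p_def .
  qed
  have Pwp: "kmult Pw p = p"
    unfolding Pw_def kmult_kfun_left
  proof (intro ext)
    fix x g h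
    show "complex_of_real (w (\<alpha> g x)) * p x g h = p x g h"
      using pW[of x g h] wW by (cases "p x g h = 0") auto
  qed
  have pPw: "kmult p Pw = p"
    unfolding Pw_def kmult_kfun_right
  proof (intro ext)
    fix x g h
    show "p x g h * complex_of_real (w (\<alpha> h x)) = p x g h"
      using pW[of x g h] wW by (cases "p x g h = 0") auto
  qed
  have PwPw: "kmult Pw Pw = a1"
  proof -
    have "kmult Pw Pw = kfun \<alpha> (\<lambda>y. complex_of_real (w y) * complex_of_real (w y))"
      unfolding Pw_def kmult_kfun_kfun ..
    also have "\<dots> = a1" unfolding a1_def w_def
      by (simp only: of_real_mult[symmetric] real_sqrt_mult_self abs_of_nonneg[OF fn])
    finally show ?thesis .
  qed
  have dd: "kmult (kadj d) d = ksub a1 p"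
  proof -
    have "kmult (kadj d) d = ksub (kmult Pw (ksub Pw p)) (kmult p (ksub Pw p))"
      unfolding dadj unfolding d_def by (rule kmult_ksub_left[OF bPw bp])
    also have "\<dots> = ksub (ksub (kmult Pw Pw) (kmult Pw p)) (ksub (kmult p Pw) (kmult p p))"
      by (simp only: kmult_ksub_right[OF bPw bp])
    also have "\<dots> = ksub a1 p" unfolding PwPw Pwp pPw pp by (simp add: ksub_def)
    finally show ?thesis .
  qed
  have "p \<in> B" if hB: "hereditary_subalg A B" and \<phi>B: "kfun \<alpha> (\<lambda>x. complex_of_real (\<phi> x)) \<in> B" for B
  proof -
    have HP: "\<And>a b. a \<in> A \<Longrightarrow> b \<in> B \<Longrightarrow> kpos A a \<Longrightarrow> kpos A (ksub b a) \<Longrightarrow> a \<in> B"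
      using hB unfolding hereditary_subalg_def by blast
    have sc: "(\<lambda>x g h. c * a x g h) \<in> B" if "a \<in> B" for c a
      using hB that unfolding hereditary_subalg_def cstar_subalg_def by blast
    define b1 where "b1 = (\<lambda>x g h. complex_of_real (1 / \<delta>) * kfun \<alpha> (\<lambda>x. complex_of_real (\<phi> x)) x g h)"
    have b1B: "b1 \<in> B" unfolding b1_def by (rule sc[OF \<phi>B])
    have "ksub b1 a1 = kfun \<alpha> (\<lambda>y. complex_of_real (\<phi> y / \<delta> - f y))"
      by (auto simp: b1_def a1_def ksub_def kfun_def fun_eq_iff)
    moreover have "kpos A (kfun \<alpha> (\<lambda>y. complex_of_real (\<phi> y / \<delta> - f y)))"
      unfolding A_def
    proof (rule kpos_kfun[OF cpt])
      show "continuous_on UNIV (\<lambda>y. \<phi> y / \<delta> - f y)"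
        by (intro continuous_on_diff continuous_on_divide \<phi>c fc continuous_on_const) (use \<delta> in auto)
      show "0 \<le> \<phi> y / \<delta> - f y" for y unfolding f_def by simp
    qed
    moreover have "kpos A a1" unfolding A_def a1_def by (rule kpos_kfun[OF cpt fc fn])
    ultimately have a1B: "a1 \<in> B" using HP[OF a1A b1B] by simp
    have "kpos A p" unfolding kpos_def A_def
      using cp_crossed[OF cpt vaA] p_def by (intro bexI[of _ "kadj v"]) simp_all
    moreover have "kpos A (ksub a1 p)" unfolding kpos_def using dA dd by metis
    ultimately show "p \<in> B" using HP[OF pA a1B] by simp
  qed
  then have "p \<in> hereditary_gen A (kfun \<alpha> (\<lambda>x. complex_of_real (\<phi> x)))"
    unfolding hereditary_gen_def by blast
  then show ?thesis using vA v(2) unfolding A_def p_def by blast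
qed

end
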